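(* Let $m\ge 2$, $\eta\in(0,1/m]$, $k>0$, $b\ge 0$ and $\tau\in(0,1)$. For all $\pi,\pi'\in\Delta_{m,\eta}$ with $\|\pi-\pi'\|_2\le b$ and all $z\in\Delta_{m,\tau}$, $$\log p_{k\pi}(z)\ \le\ \log p_{k\pi'}(z)+\sqrt{m}\,b\,k\,|\log\tau|+(m-1)\log\Gamma(k\eta)+\log\Gamma\big(k(1-(m-1)\eta)\big)-m\log\Gamma(k/m),$$ where $p_{k\pi}(z)=\Gamma(k)\prod_{i=1}^m z_i^{k\pi_i-1}/\Gamma(k\pi_i)$ denotes the density of $\mathrm{Dir}_k(\pi)$ at $z$.
   Context: For $n\in\mathbb{N}$ and $\eta\ge 0$, the $\eta$-restricted simplex is $\Delta_{n,\eta}=\{x\in\mathbb{R}^n:\sum_{i=1}^n x_i=1,\ x_i\ge\eta\ \forall i\}$. $\Gamma$ denotes the gamma function. For $k>0$ and $\pi\in\Delta_{n,\eta}$ with $\eta>0$, the Dirichlet mechanism $\mathrm{Dir}_k(\pi)$ outputs a random point of the simplex distributed according to the Dirichlet distribution with parameter vector $k\pi$, with density $\Gamma(k)\prod_{i=1}^n x_i^{k\pi_i-1}/\Gamma(k\pi_i)$. *)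

theory Defs
  imports "HOL-Analysis.Analysis"
begin

text \<open>Points of R^m are represented as functions nat => real, indexed by {0..<m}.\<close>

definition restricted_simplex :: "nat \<Rightarrow> real \<Rightarrow> (nat \<Rightarrow> real) set" where
  "restricted_simplex n \<eta> = {x. (\<Sum>i<n. x i) = 1 \<and> (\<forall>i<n. x i \<ge> \<eta>)}"

definition dirichlet_density :: "nat \<Rightarrow> real \<Rightarrow> (nat \<Rightarrow> real) \<Rightarrow> (nat \<Rightarrow> real) \<Rightarrow> real" where
  "dirichlet_density n k \<pi> z =
     Gamma k * (\<Prod>i<n. z i powr (k * \<pi> i - 1) / Gamma (k * \<pi> i))"

definition l2_dist :: "nat \<Rightarrow> (nat \<Rightarrow> real) \<Rightarrow> (nat \<Rightarrow> real) \<Rightarrow> real" where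
  "l2_dist n x y = sqrt (\<Sum>i<n. (x i - y i)^2)"

end

theory Submission
  imports Defs
begin

lemma dd_ln:
  fixes k :: real
  assumes "k > 0" and z: "\<And>i. i < n \<Longrightarrow> z i > 0" and p: "\<And>i. i < n \<Longrightarrow> \<pi> i > 0"
  shows "ln (dirichlet_density n k \<pi> z) =
    ln (Gamma k) + (\<Sum>i<n. (k * \<pi> i - 1) * ln (z i) - ln (Gamma (k * \<pi> i)))"
proof -
  have pos: "z i powr (k * \<pi> i - 1) / Gamma (k * \<pi> i) > 0" if i: "i < n" for i
  proof -
    have "z i > 0" "k * \<pi> i > 0" using z[OF i] p[OF i] assms(1) by auto
    then show ?thesis by (intro divide_pos_pos) auto
  qed
  have "ln (dirichlet_density n k \<pi> z) = ln (Gamma k) + ln (\<Prod>i<n. z i powr (k * \<pi> i - 1) / Gamma (k * \<pi> i))"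
  proof -
    have "0 < (\<Prod>i<n. z i powr (k * \<pi> i - 1) / Gamma (k * \<pi> i))"
      by (rule prod_pos) (use pos in auto)
    then show ?thesis unfolding dirichlet_density_def using assms(1) by (intro ln_mult_pos) auto
  qed
  also have "ln (\<Prod>i<n. z i powr (k * \<pi> i - 1) / Gamma (k * \<pi> i))
      = (\<Sum>i<n. ln (z i powr (k * \<pi> i - 1) / Gamma (k * \<pi> i)))"
  proof -
    have "\<And>i. i \<in> {..<n} \<Longrightarrow> z i powr (k * \<pi> i - 1) / Gamma (k * \<pi> i) \<noteq> 0"
      using pos by (metis lessThan_iff less_irrefl)
    then show ?thesis by (rule ln_prod[OF finite_lessThan])
  qed
  also have "\<dots> = (\<Sum>i<n. (k * \<pi> i - 1) * ln (z i) - ln (Gamma (k * \<pi> i)))"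
  proof (intro sum.cong refl)
    fix i assume "i \<in> {..<n}"
    then have i: "i < n" by simp
    have "z i > 0" "k * \<pi> i > 0" using z[OF i] p[OF i] assms(1) by auto
    then have "Gamma (k * \<pi> i) > 0" "z i powr (k * \<pi> i - 1) > 0" by auto
    then show "ln (z i powr (k * \<pi> i - 1) / Gamma (k * \<pi> i)) = (k * \<pi> i - 1) * ln (z i) - ln (Gamma (k * \<pi> i))"
      by (simp add: ln_div)
  qed
  finally show ?thesis .
qed

lemma simplex_upper:
  assumes "x \<in> restricted_simplex m \<eta>" "i < m"
  shows "x i \<le> 1 - real (m - 1) * \<eta>"
proof -
  have "1 = x i + (\<Sum>j\<in>{..<m} - {i}. x j)"
    using assms by (simp add: restricted_simplex_def sum.remove[of "{..<m}" i])
  moreover have "(\<Sum>j\<in>{..<m} - {i}. x j) \<ge> (\<Sum>j\<in>{..<m} - {i}. \<eta>)"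
    using assms by (intro sum_mono) (auto simp: restricted_simplex_def)
  moreover have "(\<Sum>j\<in>{..<m} - {i}. \<eta>) = real (m - 1) * \<eta>"
    using assms by simp
  ultimately show ?thesis by linarith
qed

theorem mainTheorem3:
  fixes m :: nat and \<eta> k b \<tau> :: real and \<pi> \<pi>' z :: "nat \<Rightarrow> real"
  assumes "m \<ge> 2"
    and "0 < \<eta>" and "\<eta> \<le> 1 / real m"
    and "k > 0" and "b \<ge> 0"
    and "0 < \<tau>" and "\<tau> < 1"
    and "\<pi> \<in> restricted_simplex m \<eta>" and "\<pi>' \<in> restricted_simplex m \<eta>"
    and "l2_dist m \<pi> \<pi>' \<le> b"
    and "z \<in> restricted_simplex m \<tau>"
  shows "ln (dirichlet_density m k \<pi> z)
     \<le> ln (dirichlet_density m k \<pi>' z) + sqrt (real m) * b * k * \<bar>ln \<tau>\<bar>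
        + real (m - 1) * ln (Gamma (k * \<eta>))
        + ln (Gamma (k * (1 - real (m - 1) * \<eta>)))
        - real m * ln (Gamma (k / real m))"
proof -
  define L where "L = (\<lambda>x::real. ln (Gamma x))"
  define M where "M = 1 - real (m - 1) * \<eta>"
  have conv: "convex_on {0<..} L"
    using log_convex_Gamma_real unfolding L_def by (simp add: o_def)
  have pge: "\<And>i. i < m \<Longrightarrow> \<pi> i \<ge> \<eta>" "\<And>i. i < m \<Longrightarrow> \<pi>' i \<ge> \<eta>"
    using assms(8,9) by (auto simp: restricted_simplex_def)
  have psum: "(\<Sum>i<m. \<pi> i) = 1" "(\<Sum>i<m. \<pi>' i) = 1"
    using assms(8,9) by (auto simp: restricted_simplex_def)
  have zge: "\<And>i. i < m \<Longrightarrow> z i \<ge> \<tau>" using assms(11) by (auto simp: restricted_simplex_def)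
  have zle: "\<And>i. i < m \<Longrightarrow> z i \<le> 1"
  proof -
    fix i assume "i < m"
    have "z i \<le> 1 - real (m - 1) * \<tau>" using simplex_upper[OF assms(11) \<open>i<m\<close>] .
    moreover have "real (m - 1) * \<tau> \<ge> 0" using assms(6) by simp
    ultimately show "z i \<le> 1" by linarith
  qed
  have zpos: "\<And>i. i < m \<Longrightarrow> z i > 0" using zge assms(6) by (meson less_le_trans)
  have ppos: "\<And>i. i < m \<Longrightarrow> \<pi> i > 0" "\<And>i. i < m \<Longrightarrow> \<pi>' i > 0"
    using pge assms(2) by (meson less_le_trans)+
  have D1: "ln (dirichlet_density m k \<pi> z) = ln (Gamma k) + (\<Sum>i<m. (k * \<pi> i - 1) * ln (z i) - L (k * \<pi> i))"
    unfolding L_def using dd_ln[OF assms(4) zpos ppos(1)] by simp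
  have D2: "ln (dirichlet_density m k \<pi>' z) = ln (Gamma k) + (\<Sum>i<m. (k * \<pi>' i - 1) * ln (z i) - L (k * \<pi>' i))"
    unfolding L_def using dd_ln[OF assms(4) zpos ppos(2)] by simp
  have diff: "ln (dirichlet_density m k \<pi> z) - ln (dirichlet_density m k \<pi>' z)
     = k * (\<Sum>i<m. (\<pi> i - \<pi>' i) * ln (z i)) + (\<Sum>i<m. L (k * \<pi>' i)) - (\<Sum>i<m. L (k * \<pi> i))"
  proof -
    have e: "(\<Sum>i<m. (k * \<pi> i - 1) * ln (z i)) - (\<Sum>i<m. (k * \<pi>' i - 1) * ln (z i))
        = k * (\<Sum>i<m. (\<pi> i - \<pi>' i) * ln (z i))"
    proof -
      have "(\<Sum>i<m. (k * \<pi> i - 1) * ln (z i)) - (\<Sum>i<m. (k * \<pi>' i - 1) * ln (z i))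
          = (\<Sum>i<m. (k * \<pi> i - 1) * ln (z i) - (k * \<pi>' i - 1) * ln (z i))"
        by (simp only: sum_subtractf)
      also have "\<dots> = (\<Sum>i<m. k * ((\<pi> i - \<pi>' i) * ln (z i)))"
        by (intro sum.cong) (simp_all add: algebra_simps)
      also have "\<dots> = k * (\<Sum>i<m. (\<pi> i - \<pi>' i) * ln (z i))"
        by (simp only: sum_distrib_left)
      finally show ?thesis .
    qed
    show ?thesis unfolding D1 D2 sum_subtractf using e by linarith
  qed
  have A: "(\<Sum>i<m. (\<pi> i - \<pi>' i) * ln (z i)) \<le> sqrt (real m) * b * \<bar>ln \<tau>\<bar>"
  proof -
    have lnb: "\<And>i. i < m \<Longrightarrow> (ln (z i))^2 \<le> (ln \<tau>)^2"
    proof -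
      fix i assume i: "i < m"
      have "ln \<tau> \<le> ln (z i)" using zge[OF i] assms(6) by simp
      moreover have "ln (z i) \<le> 0" using zle[OF i] zpos[OF i] by simp
      ultimately have "\<bar>ln (z i)\<bar> \<le> \<bar>ln \<tau>\<bar>" by linarith
      then show "(ln (z i))^2 \<le> (ln \<tau>)^2"
        by (metis abs_ge_zero power2_abs power_mono)
    qed
    have "(\<Sum>i<m. (\<pi> i - \<pi>' i) * ln (z i))^2 \<le> (\<Sum>i<m. (\<pi> i - \<pi>' i)^2) * (\<Sum>i<m. (ln (z i))^2)"
      by (rule Cauchy_Schwarz_ineq_sum)
    also have "\<dots> \<le> b^2 * (real m * (ln \<tau>)^2)"
    proof (rule mult_mono)
      have sb: "sqrt (\<Sum>i<m. (\<pi> i - \<pi>' i)^2) \<le> b" using assms(10) by (simp add: l2_dist_def)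
      have S0: "(\<Sum>i<m. (\<pi> i - \<pi>' i)^2) \<ge> 0" by (intro sum_nonneg) auto
      have "(sqrt (\<Sum>i<m. (\<pi> i - \<pi>' i)^2))^2 \<le> b^2"
        by (rule power_mono[OF sb]) (use S0 in simp)
      then show "(\<Sum>i<m. (\<pi> i - \<pi>' i)^2) \<le> b^2" using S0 by simp
      have "(\<Sum>i<m. (ln (z i))^2) \<le> (\<Sum>i<m. (ln \<tau>)^2)" using lnb by (intro sum_mono) auto
      then show "(\<Sum>i<m. (ln (z i))^2) \<le> real m * (ln \<tau>)^2" by simp
    qed (auto intro: sum_nonneg)
    also have "\<dots> = (sqrt (real m) * b * \<bar>ln \<tau>\<bar>)^2"
      by (simp add: power_mult_distrib)
    finally have "(\<Sum>i<m. (\<pi> i - \<pi>' i) * ln (z i))^2 \<le> (sqrt (real m) * b * \<bar>ln \<tau>\<bar>)^2" .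
    then have "\<bar>\<Sum>i<m. (\<pi> i - \<pi>' i) * ln (z i)\<bar> \<le> \<bar>sqrt (real m) * b * \<bar>ln \<tau>\<bar>\<bar>"
      using abs_le_square_iff by blast
    then show ?thesis using assms(5) by (simp add: abs_mult)
  qed
  have B: "(\<Sum>i<m. L (k * \<pi>' i)) \<le> real (m - 1) * L (k * \<eta>) + L (k * M)"
  proof -
    have m1: "real (m - 1) = real m - 1" using assms(1) by simp
    have etaM: "\<eta> \<le> M"
    proof -
      have "real m * \<eta> \<le> 1" using assms(1,3) by (simp add: field_simps)
      then show ?thesis unfolding M_def m1 by (simp add: algebra_simps)
    qed
    define d where "d = k * M - k * \<eta>"
    have convI: "convex_on {k * \<eta>..k * M} L"
      using assms(2,4) by (intro convex_on_subset[OF conv]) (auto intro: less_le_trans[OF mult_pos_pos])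
    have each: "\<And>i. i < m \<Longrightarrow> L (k * \<pi>' i) \<le> (L (k * M) - L (k * \<eta>)) / d * (k * \<pi>' i - k * \<eta>) + L (k * \<eta>)"
      unfolding d_def
    proof (rule convex_onD_Icc'[OF convI])
      fix i assume i: "i < m"
      have "\<pi>' i \<le> M" unfolding M_def by (rule simplex_upper[OF assms(9) i])
      then show "k * \<pi>' i \<in> {k * \<eta>..k * M}" using pge(2)[OF i] assms(4) by auto
    qed
    define c where "c = (L (k * M) - L (k * \<eta>)) / d"
    have "(\<Sum>i<m. L (k * \<pi>' i)) \<le> (\<Sum>i<m. c * (k * \<pi>' i - k * \<eta>) + L (k * \<eta>))"
      using each unfolding c_def by (intro sum_mono) auto
    also have "\<dots> = c * (\<Sum>i<m. k * \<pi>' i - k * \<eta>) + (\<Sum>i<m. L (k * \<eta>))"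
      by (simp only: sum.distrib sum_distrib_left)
    also have "(\<Sum>i<m. k * \<pi>' i - k * \<eta>) = k * (\<Sum>i<m. \<pi>' i) - real m * k * \<eta>"
      by (simp add: sum_subtractf sum_distrib_left[symmetric])
    also have "k * (\<Sum>i<m. \<pi>' i) - real m * k * \<eta> = d"
      unfolding d_def M_def psum m1 by (simp add: algebra_simps)
    also have "c * d = L (k * M) - L (k * \<eta>)"
    proof (cases "d = 0")
      case True
      then have "k * M = k * \<eta>" unfolding d_def by simp
      then have "L (k * M) = L (k * \<eta>)" by (rule arg_cong)
      then show ?thesis using True unfolding c_def by simp
    qed (simp add: c_def)
    finally show ?thesis unfolding m1 by (simp add: algebra_simps)
  qed
  have C: "real m * L (k / real m) \<le> (\<Sum>i<m. L (k * \<pi> i))"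
  proof -
    have mpos: "real m > 0" using assms(1) by simp
    have "L (\<Sum>i<m. (1 / real m) *\<^sub>R (k * \<pi> i)) \<le> (\<Sum>i<m. (1 / real m) * L (k * \<pi> i))"
    proof (intro convex_on_sum[OF _ _ conv])
      have "(0::nat) \<in> {..<m}" using assms(1) by simp
      then show "{..<m} \<noteq> {}" by blast
    qed (use assms(1,4) ppos(1) mpos in auto)
    moreover have "(\<Sum>i<m. (1 / real m) *\<^sub>R (k * \<pi> i)) = k / real m"
      using psum(1) by (simp add: sum_divide_distrib[symmetric] sum_distrib_left[symmetric])
    moreover have "(\<Sum>i<m. (1 / real m) * L (k * \<pi> i)) = (\<Sum>i<m. L (k * \<pi> i)) / real m"
      by (simp add: sum_divide_distrib)
    ultimately have "L (k / real m) \<le> (\<Sum>i<m. L (k * \<pi> i)) / real m" by simp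
    then show ?thesis using mpos by (simp add: field_simps)
  qed
  have "k * (\<Sum>i<m. (\<pi> i - \<pi>' i) * ln (z i)) \<le> k * (sqrt (real m) * b * \<bar>ln \<tau>\<bar>)"
    using A assms(4) by (intro mult_left_mono) auto
  moreover have "k * (sqrt (real m) * b * \<bar>ln \<tau>\<bar>) = sqrt (real m) * b * k * \<bar>ln \<tau>\<bar>"
    by (simp add: ac_simps)
  ultimately show ?thesis using diff B C unfolding L_def M_def by linarith
qed

end
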